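(* Let $\boldsymbol{\mu}_+,\boldsymbol{\mu}_-\in\mathbb{R}^d$, $\sigma>0$, and let $(\boldsymbol{X},Y)$ be random with $P(Y=+)=P(Y=-)=1/2$ and $\boldsymbol{X}\mid Y=i\sim N(\boldsymbol{\mu}_i,\sigma^2\boldsymbol{I}_d)$ for $i\in\{+,-\}$. Let $\boldsymbol{w}\in\mathbb{R}^d\setminus\{\boldsymbol{0}\}$, $b\in\mathbb{R}$ and let the linear classifier assign $\boldsymbol{x}$ to class $+$ if $\boldsymbol{w}\cdot\boldsymbol{x}+b>0$ and to class $-$ otherwise. Let $\varepsilon>0$. Put $\boldsymbol{\mu}=\frac12(\boldsymbol{\mu}_+-\boldsymbol{\mu}_-)$, $\bar{\boldsymbol{\mu}}=\frac12(\boldsymbol{\mu}_++\boldsymbol{\mu}_-)$, $b'=\boldsymbol{w}\cdot\bar{\boldsymbol{\mu}}+b$. Let $p_m$ be the probability that $\boldsymbol{X}$ is misclassified and $p_{adv}$ the probability that $\boldsymbol{X}$ is correctly classified and has an $\varepsilon$-adversarial example. Then $$p_{adv}=1-p_m-\frac12\left[\Phi\!\left(\frac{\boldsymbol{w}\cdot\boldsymbol{\mu}+b'}{\|\boldsymbol{w}\|\sigma}-\frac{\varepsilon}{\sigma}\right)+\Phi\!\left(\frac{\boldsymbol{w}\cdot\boldsymbol{\mu}-b'}{\|\boldsymbol{w}\|\sigma}-\frac{\varepsilon}{\sigma}\right)\right].$$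
   Context: $\Phi$ is the standard normal CDF and $\|\cdot\|$ the Euclidean norm. An $\varepsilon$-adversarial example of $\boldsymbol{x}$ is a point $\boldsymbol{x}'$ with $\|\boldsymbol{x}-\boldsymbol{x}'\|\le\varepsilon$ that is assigned a different class than $\boldsymbol{x}$ by the classifier. *)

theory Defs
  imports "HOL-Probability.Probability"
begin

definition Phi :: "real \<Rightarrow> real" where
  "Phi x = measure (density lborel (\<lambda>t. ennreal (std_normal_density t))) {..x}"

definition gauss_density :: "'a::euclidean_space \<Rightarrow> real \<Rightarrow> 'a \<Rightarrow> real" where
  "gauss_density mu sig x =
     (2 * pi * sig^2) powr (- real DIM('a) / 2) * exp (- ((norm (x - mu)) ^ 2) / (2 * sig ^ 2))"

definition gauss_measure :: "'a::euclidean_space \<Rightarrow> real \<Rightarrow> 'a measure" where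
  "gauss_measure mu sig = density lborel (\<lambda>x. ennreal (gauss_density mu sig x))"

text \<open>Linear classifier: True means class +, False means class -.\<close>
definition lin_classify :: "'a::euclidean_space \<Rightarrow> real \<Rightarrow> 'a \<Rightarrow> bool" where
  "lin_classify w b x = (w \<bullet> x + b > 0)"

definition has_adv_example :: "'a::euclidean_space \<Rightarrow> real \<Rightarrow> real \<Rightarrow> 'a \<Rightarrow> bool" where
  "has_adv_example w b eps x =
     (\<exists>x'. norm (x - x') \<le> eps \<and> lin_classify w b x' \<noteq> lin_classify w b x)"

end

theory Submission
  imports Defs
begin


lemma PiM_density_prod:
  fixes g :: "'i \<Rightarrow> real \<Rightarrow> real"
  assumes fin: "finite I" and meas[measurable]: "\<And>i. g i \<in> borel_measurable borel"
    and nn: "\<And>i x. g i x \<ge> 0" and prob: "\<And>i. prob_space (density lborel (g i))"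
  shows "density (PiM I (\<lambda>_. lborel)) (\<lambda>f. ennreal (\<Prod>i\<in>I. g i (f i)))
       = PiM I (\<lambda>i. density lborel (\<lambda>x. ennreal (g i x)))"
proof -
  interpret D: product_sigma_finite "\<lambda>i. density lborel (\<lambda>x. ennreal (g i x))"
    unfolding product_sigma_finite_def using prob prob_space_imp_sigma_finite by blast
  interpret L: product_sigma_finite "\<lambda>_::'i. lborel :: real measure"
    by standard
  show ?thesis
  proof (rule D.PiM_eqI[OF fin])
    show "sets (density (PiM I (\<lambda>_. lborel)) (\<lambda>f. ennreal (\<Prod>i\<in>I. g i (f i))))
        = sets (PiM I (\<lambda>i. density lborel (\<lambda>x. ennreal (g i x))))"
      unfolding sets_density by (rule sets_PiM_cong) auto
  next
    fix A assume A: "\<And>i. i \<in> I \<Longrightarrow> A i \<in> sets (density lborel (\<lambda>x. ennreal (g i x)))"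
    then have A': "\<And>i. i \<in> I \<Longrightarrow> A i \<in> sets borel" by simp
    have PA: "Pi\<^sub>E I A \<in> sets (PiM I (\<lambda>_. lborel))"
      using A' by (intro sets_PiM_I_finite fin) auto
    have "emeasure (density (PiM I (\<lambda>_. lborel)) (\<lambda>f. ennreal (\<Prod>i\<in>I. g i (f i)))) (Pi\<^sub>E I A)
       = (\<integral>\<^sup>+ f. ennreal (\<Prod>i\<in>I. g i (f i)) * indicator (Pi\<^sub>E I A) f \<partial>PiM I (\<lambda>_. lborel))"
      using PA by (subst emeasure_density) auto
    also have "\<dots> = (\<integral>\<^sup>+ f. (\<Prod>i\<in>I. ennreal (g i (f i)) * indicator (A i) (f i)) \<partial>PiM I (\<lambda>_. lborel))"
    proof (rule nn_integral_cong)
      fix f assume "f \<in> space (PiM I (\<lambda>_. lborel :: real measure))"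
      then have fe: "f \<in> extensional I" by (simp add: space_PiM PiE_def)
      show "ennreal (\<Prod>i\<in>I. g i (f i)) * indicator (Pi\<^sub>E I A) f = (\<Prod>i\<in>I. ennreal (g i (f i)) * indicator (A i) (f i))"
        using fe fin by (auto simp: indicator_def PiE_iff prod_ennreal[symmetric] nn prod_nonneg prod.distrib[symmetric] ennreal_mult'[symmetric] intro: prod_zero)
    qed
    also have "\<dots> = (\<Prod>i\<in>I. \<integral>\<^sup>+ x. ennreal (g i x) * indicator (A i) x \<partial>lborel)"
      using A' by (intro L.product_nn_integral_prod fin) auto
    also have "\<dots> = (\<Prod>i\<in>I. emeasure (density lborel (\<lambda>x. ennreal (g i x))) (A i))"
      using A' by (intro prod.cong refl) (simp add: emeasure_density)
    finally show "emeasure (density (PiM I (\<lambda>_. lborel)) (\<lambda>f. ennreal (\<Prod>i\<in>I. g i (f i)))) (Pi\<^sub>E I A)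
       = (\<Prod>i\<in>I. emeasure (density lborel (\<lambda>x. ennreal (g i x))) (A i))" .
  qed
qed



lemma inner_sum_Basis_coord:
  fixes f :: "'a::euclidean_space \<Rightarrow> real"
  assumes "b \<in> Basis"
  shows "(\<Sum>c\<in>Basis. f c *\<^sub>R c) \<bullet> b = f b"
  using assms by (simp add: inner_sum_left inner_Basis if_distrib sum.delta cong: if_cong)

lemma norm_sq_Basis:
  fixes x :: "'a::euclidean_space"
  shows "(norm x)^2 = (\<Sum>b\<in>Basis. (x \<bullet> b)^2)"
proof -
  have "(norm x)^2 = x \<bullet> x" by (simp add: power2_norm_eq_inner)
  also have "\<dots> = (\<Sum>b\<in>Basis. (x \<bullet> b)^2)" by (subst euclidean_inner) (simp add: power2_eq_square)
  finally show ?thesis .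
qed

lemma gauss_density_prod:
  fixes mu :: "'a::euclidean_space"
  assumes "sig > 0"
  shows "gauss_density mu sig (\<Sum>b\<in>Basis. f b *\<^sub>R b)
       = (\<Prod>b\<in>Basis. normal_density (mu \<bullet> b) sig (f b))"
proof -
  let ?x = "(\<Sum>b\<in>Basis. f b *\<^sub>R b)"
  let ?c = "2 * pi * sig^2"
  have c: "?c > 0" using assms by simp
  have n: "(norm (?x - mu))^2 = (\<Sum>b\<in>Basis. (f b - mu \<bullet> b)^2)"
    by (simp add: norm_sq_Basis inner_diff_left inner_sum_Basis_coord cong: sum.cong)
  have p: "?c powr (- real DIM('a) / 2) = (1 / sqrt ?c) ^ DIM('a)"
  proof -
    have "1 / sqrt ?c = ?c powr (-1/2)"
      using c by (simp add: sqrt_def powr_minus_divide root_powr_inverse powr_minus)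
    then have "(1 / sqrt ?c) ^ DIM('a) = (?c powr (-1/2)) ^ DIM('a)" by simp
    also have "\<dots> = (?c powr (-1/2)) powr (real DIM('a))"
      by (rule powr_realpow[symmetric]) (use c assms in simp)
    also have "\<dots> = ?c powr (- real DIM('a) / 2)"
      by (simp add: powr_powr)
    finally show ?thesis by simp
  qed
  have "gauss_density mu sig ?x = (1 / sqrt ?c) ^ DIM('a) * exp (\<Sum>b\<in>Basis. - ((f b - mu \<bullet> b)^2) / (2 * sig^2))"
    unfolding gauss_density_def p n
    by (simp add: sum_negf sum_divide_distrib)
  also have "\<dots> = (\<Prod>b\<in>Basis. 1 / sqrt ?c * exp (- ((f b - mu \<bullet> b)^2) / (2 * sig^2)))"
    by (simp only: exp_sum prod.distrib prod_constant finite_Basis)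
  also have "\<dots> = (\<Prod>b\<in>Basis. normal_density (mu \<bullet> b) sig (f b))"
    by (simp add: normal_density_def)
  finally show ?thesis .
qed


definition PG :: "'a::euclidean_space \<Rightarrow> real \<Rightarrow> ('a \<Rightarrow> real) measure" where
  "PG mu sig = PiM Basis (\<lambda>b. density lborel (\<lambda>x. ennreal (normal_density (mu \<bullet> b) sig x)))"

lemma prob_space_PG: "sig > 0 \<Longrightarrow> prob_space (PG mu sig)"
  unfolding PG_def by (intro prob_space_PiM prob_space_normal_density)

lemma gauss_measure_distr:
  fixes mu :: "'a::euclidean_space"
  assumes "sig > 0"
  shows "gauss_measure mu sig = distr (PG mu sig) borel (\<lambda>f. \<Sum>b\<in>Basis. f b *\<^sub>R b)"
proof -
  let ?T = "\<lambda>f::'a \<Rightarrow> real. \<Sum>b\<in>Basis. f b *\<^sub>R b"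
  have gm[measurable]: "(\<lambda>x. ennreal (gauss_density mu sig x)) \<in> borel_measurable (borel :: 'a measure)"
    unfolding gauss_density_def by measurable
  have Tm: "?T \<in> measurable (PiM Basis (\<lambda>_. lborel)) (borel :: 'a measure)"
    by measurable
  have "gauss_measure mu sig = density (distr (PiM Basis (\<lambda>_. lborel)) borel ?T) (\<lambda>x. ennreal (gauss_density mu sig x))"
    unfolding gauss_measure_def by (subst lborel_eq[where 'a='a]) (rule refl)
  also have "\<dots> = distr (density (PiM Basis (\<lambda>_. lborel)) (\<lambda>f. ennreal (gauss_density mu sig (?T f)))) borel ?T"
    by (rule density_distr[OF gm Tm])
  also have "density (PiM Basis (\<lambda>_. lborel)) (\<lambda>f. ennreal (gauss_density mu sig (?T f)))
     = density (PiM Basis (\<lambda>_. lborel)) (\<lambda>f. ennreal (\<Prod>b\<in>Basis. normal_density (mu \<bullet> b) sig (f b)))"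
    using assms by (simp add: gauss_density_prod)
  also have "\<dots> = PG mu sig"
    unfolding PG_def
    by (rule PiM_density_prod[where g="\<lambda>b. normal_density (mu \<bullet> b) sig"])
       (use assms in \<open>auto intro: prob_space_normal_density\<close>)
  finally show ?thesis .
qed

lemma PG_coord_distributed:
  fixes mu :: "'a::euclidean_space"
  assumes "b \<in> Basis" and sig: "sig > 0"
  shows "distributed (PG mu sig) lborel (\<lambda>f. f b) (normal_density (mu \<bullet> b) sig)"
  unfolding distributed_def
proof (intro conjI)
  have "distr (PG mu sig) lborel (\<lambda>f. f b) = distr (PG mu sig) (density lborel (\<lambda>x. ennreal (normal_density (mu \<bullet> b) sig x))) (\<lambda>f. f b)"
    by (rule distr_cong) auto
  also have "\<dots> = density lborel (\<lambda>x. ennreal (normal_density (mu \<bullet> b) sig x))"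
    unfolding PG_def by (rule distr_PiM_component[OF prob_space_normal_density[OF sig] assms(1)])
  finally show "distr (PG mu sig) lborel (\<lambda>f. f b) = density lborel (\<lambda>x. ennreal (normal_density (mu \<bullet> b) sig x))" .
  show "(\<lambda>x. ennreal (normal_density (mu \<bullet> b) sig x)) \<in> borel_measurable lborel" by simp
  show "(\<lambda>f. f b) \<in> measurable (PG mu sig) lborel"
  proof -
    have "(\<lambda>f. f b) \<in> measurable (PiM Basis (\<lambda>b. density lborel (\<lambda>x. ennreal (normal_density (mu \<bullet> b) sig x))))
                 (density lborel (\<lambda>x. ennreal (normal_density (mu \<bullet> b) sig x)))"
      by (rule measurable_component_singleton[OF assms(1)])
    then show ?thesis unfolding PG_def by (simp only: measurable_cong_sets[OF refl sets_density])
  qed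
qed

lemma PG_indep:
  fixes mu :: "'a::euclidean_space"
  assumes sig: "sig > 0"
  shows "prob_space.indep_vars (PG mu sig) (\<lambda>_. borel) (\<lambda>b f. f b) Basis"
proof -
  interpret prob_space "PG mu sig" by (rule prob_space_PG[OF sig])
  let ?M = "\<lambda>b. density lborel (\<lambda>x. ennreal (normal_density (mu \<bullet> b) sig x))"
  have rv: "random_variable borel (\<lambda>f. f b)" if "b \<in> Basis" for b
    using PG_coord_distributed[OF that sig, of mu] by (simp add: distributed_def)
  show ?thesis
  proof (subst indep_vars_iff_distr_eq_PiM'[OF _ rv])
    show "Basis \<noteq> {}" by simp
    have "distr (PG mu sig) (PiM Basis (\<lambda>_. borel)) (\<lambda>x. \<lambda>b\<in>Basis. x b)
        = distr (PG mu sig) (PG mu sig) (\<lambda>x. x)"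
      unfolding PG_def
      by (rule distr_cong) (auto intro!: sets_PiM_cong simp: space_PiM PiE_def extensional_restrict)
    also have "\<dots> = PG mu sig" by (rule distr_id)
    also have "\<dots> = PiM Basis ?M" by (simp add: PG_def)
    also have "\<dots> = PiM Basis (\<lambda>b. distr (PG mu sig) borel (\<lambda>x. x b))"
    proof (rule PiM_cong[OF refl])
      fix b :: 'a assume b: "b \<in> Basis"
      have "distr (PG mu sig) borel (\<lambda>x. x b) = density lborel (\<lambda>x. ennreal (normal_density (mu \<bullet> b) sig x))"
        using PG_coord_distributed[OF b sig, of mu] by (simp add: distributed_def distr_cong[OF refl sets_lborel])
      then show "?M b = distr (PG mu sig) borel (\<lambda>x. x b)" by simp
    qed
    finally show "distr (PG mu sig) (PiM Basis (\<lambda>_. borel)) (\<lambda>x. \<lambda>b\<in>Basis. x b)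
        = PiM Basis (\<lambda>b. distr (PG mu sig) borel (\<lambda>x. x b))" .
  qed
qed

lemma PG_linear_normal:
  fixes mu w :: "'a::euclidean_space"
  assumes sig: "sig > 0" and w: "w \<noteq> 0"
  shows "distributed (PG mu sig) lborel (\<lambda>f. w \<bullet> (\<Sum>b\<in>Basis. f b *\<^sub>R b))
           (normal_density (w \<bullet> mu) (norm w * sig))"
proof -
  interpret prob_space "PG mu sig" by (rule prob_space_PG[OF sig])
  define I where "I = {b\<in>Basis. w \<bullet> b \<noteq> 0}"
  have fin: "finite I" unfolding I_def by simp
  have ne: "I \<noteq> {}"
  proof
    assume "I = {}"
    then have "\<forall>b\<in>Basis. w \<bullet> b = 0" unfolding I_def by auto
    then have "w = 0" by (simp add: euclidean_all_zero_iff)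
    with w show False by simp
  qed
  have IB: "I \<subseteq> Basis" unfolding I_def by auto
  have ind: "indep_vars (\<lambda>_. borel) (\<lambda>b f. (w \<bullet> b) * f b) I"
  proof -
    have "indep_vars (\<lambda>_. borel) (\<lambda>b f. (\<lambda>x. (w \<bullet> b) * x) (f b)) Basis"
      by (rule indep_vars_compose2[OF PG_indep[OF sig]]) simp
    then show ?thesis by (rule indep_vars_subset[OF _ IB])
  qed
  have nd: "distributed (PG mu sig) lborel (\<lambda>f. (w \<bullet> b) * f b)
              (normal_density ((w \<bullet> b) * (mu \<bullet> b)) (\<bar>w \<bullet> b\<bar> * sig))" if "b \<in> I" for b
  proof -
    have b: "b \<in> Basis" "w \<bullet> b \<noteq> 0" using that unfolding I_def by auto
    from normal_density_affine[OF PG_coord_distributed[OF b(1) sig, of mu] sig b(2), of 0]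
    show ?thesis by simp
  qed
  have pos: "\<And>b. b \<in> I \<Longrightarrow> 0 < \<bar>w \<bullet> b\<bar> * sig" using sig unfolding I_def by auto
  from sum_indep_normal[OF fin ne ind pos nd]
  have D: "distributed (PG mu sig) lborel (\<lambda>f. \<Sum>b\<in>I. (w \<bullet> b) * f b)
     (normal_density (\<Sum>b\<in>I. (w \<bullet> b) * (mu \<bullet> b)) (sqrt (\<Sum>b\<in>I. (\<bar>w \<bullet> b\<bar> * sig)\<^sup>2)))" .
  have e1: "(\<lambda>f. \<Sum>b\<in>I. (w \<bullet> b) * f b) = (\<lambda>f. w \<bullet> (\<Sum>b\<in>Basis. f b *\<^sub>R b))"
  proof
    fix f :: "'a \<Rightarrow> real"
    have "(\<Sum>b\<in>I. (w \<bullet> b) * f b) = (\<Sum>b\<in>Basis. (w \<bullet> b) * f b)"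
      by (rule sum.mono_neutral_left) (auto simp: I_def)
    also have "\<dots> = w \<bullet> (\<Sum>b\<in>Basis. f b *\<^sub>R b)"
      by (simp add: inner_sum_right mult.commute)
    finally show "(\<Sum>b\<in>I. (w \<bullet> b) * f b) = w \<bullet> (\<Sum>b\<in>Basis. f b *\<^sub>R b)" .
  qed
  have e2: "(\<Sum>b\<in>I. (w \<bullet> b) * (mu \<bullet> b)) = w \<bullet> mu"
  proof -
    have "(\<Sum>b\<in>I. (w \<bullet> b) * (mu \<bullet> b)) = (\<Sum>b\<in>Basis. (w \<bullet> b) * (mu \<bullet> b))"
      by (rule sum.mono_neutral_left) (auto simp: I_def)
    also have "\<dots> = w \<bullet> mu" by (rule euclidean_inner[symmetric])
    finally show ?thesis .
  qed
  have e3: "sqrt (\<Sum>b\<in>I. (\<bar>w \<bullet> b\<bar> * sig)\<^sup>2) = norm w * sig"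
  proof -
    have "(\<Sum>b\<in>I. (\<bar>w \<bullet> b\<bar> * sig)\<^sup>2) = (\<Sum>b\<in>Basis. (w \<bullet> b)\<^sup>2) * sig\<^sup>2"
    proof -
      have "(\<Sum>b\<in>I. (\<bar>w \<bullet> b\<bar> * sig)\<^sup>2) = (\<Sum>b\<in>Basis. (\<bar>w \<bullet> b\<bar> * sig)\<^sup>2)"
        by (rule sum.mono_neutral_left) (auto simp: I_def)
      also have "\<dots> = (\<Sum>b\<in>Basis. (w \<bullet> b)\<^sup>2) * sig\<^sup>2"
        by (simp add: power_mult_distrib sum_distrib_right)
      finally show ?thesis .
    qed
    also have "\<dots> = (norm w * sig)\<^sup>2" by (simp add: norm_sq_Basis power_mult_distrib)
    finally show ?thesis using sig by simp
  qed
  show ?thesis using D unfolding e1 e2 e3 .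
qed

lemma (in prob_space) normal_le_Phi:
  assumes Z: "distributed M lborel Z (normal_density m s)" and s: "s > 0"
  shows "prob {x\<in>space M. Z x \<le> c} = Phi ((c - m) / s)"
proof -
  let ?Y = "\<lambda>x. (Z x - m) / s"
  have Y: "distributed M lborel ?Y std_normal_density"
    using Z normal_standard_normal_convert[OF s, of Z m] by simp
  have Ym: "?Y \<in> measurable M lborel" using Y by (simp add: distributed_def)
  have "Phi ((c - m) / s) = measure (distr M lborel ?Y) {..(c - m) / s}"
    unfolding Phi_def distributed_distr_eq_density[OF Y] ..
  also have "\<dots> = measure M (?Y -` {..(c - m) / s} \<inter> space M)"
    by (rule measure_distr[OF Ym]) simp
  also have "?Y -` {..(c - m) / s} \<inter> space M = {x\<in>space M. Z x \<le> c}"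
    using s by (auto simp: divide_le_cancel)
  finally show ?thesis by simp
qed

lemma (in prob_space) normal_gt_Phi:
  assumes Z: "distributed M lborel Z (normal_density m s)" and s: "s > 0"
  shows "prob {x\<in>space M. Z x > c} = Phi ((m - c) / s)"
proof -
  have Zm: "Z \<in> measurable M lborel" using Z by (simp add: distributed_def)
  have Z': "distributed M lborel (\<lambda>x. 0 + (-1) * Z x) (normal_density (0 + (-1) * m) (\<bar>-1\<bar> * s))"
    by (rule normal_density_affine[OF Z s]) simp
  then have Z'': "distributed M lborel (\<lambda>x. - Z x) (normal_density (- m) s)" by simp
  have "Phi ((m - c) / s) = prob {x\<in>space M. - Z x \<le> - c}"
    using normal_le_Phi[OF Z'' s, of "-c"] by simp
  also have "{x\<in>space M. - Z x \<le> - c} = {x\<in>space M. Z x > c} \<union> {x\<in>space M. Z x = c}"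
    by auto
  also have "prob \<dots> = prob {x\<in>space M. Z x > c}"
  proof -
    have null: "prob {x\<in>space M. Z x = c} = 0"
    proof -
      have "prob {x\<in>space M. Z x = c} = measure (distr M lborel Z) {c}"
        by (subst measure_distr[OF Zm]) (auto intro!: arg_cong[where f="prob"])
      also have "\<dots> = measure (density lborel (\<lambda>x. ennreal (normal_density m s x))) {c}"
        unfolding distributed_distr_eq_density[OF Z] ..
      also have "\<dots> = 0"
      proof -
        have "{c} \<in> null_sets (density lborel (\<lambda>x. ennreal (normal_density m s x)))"
        proof -
          have "AE x in lborel. x \<in> {c} \<longrightarrow> ennreal (normal_density m s x) = 0"
            using AE_lborel_singleton[of c] by eventually_elim auto
          then show ?thesis by (subst null_sets_density_iff) auto
        qed
        then show ?thesis by (simp add: measure_eq_0_null_sets)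
      qed
      finally show ?thesis .
    qed
    have m1: "{x\<in>space M. Z x > c} \<in> events" using Zm by measurable
    have m2: "{x\<in>space M. Z x = c} \<in> events" using Zm by measurable
    have "prob ({x\<in>space M. Z x > c} \<union> {x\<in>space M. Z x = c})
        = prob {x\<in>space M. Z x > c} + prob {x\<in>space M. Z x = c}"
      by (rule finite_measure_Union[OF m1 m2]) auto
    then show ?thesis using null by simp
  qed
  finally show ?thesis by simp
qed

lemma gauss_le_Phi:
  fixes mu w :: "'a::euclidean_space"
  assumes sig: "sig > 0" and w: "w \<noteq> 0"
  shows "measure (gauss_measure mu sig) {x. w \<bullet> x \<le> c} = Phi ((c - w \<bullet> mu) / (norm w * sig))"
proof -
  interpret prob_space "PG mu sig" by (rule prob_space_PG[OF sig])
  let ?T = "\<lambda>f::'a \<Rightarrow> real. \<Sum>b\<in>Basis. f b *\<^sub>R b"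
  have Tm: "?T \<in> measurable (PG mu sig) (borel :: 'a measure)"
    unfolding PG_def by measurable
  have "measure (gauss_measure mu sig) {x. w \<bullet> x \<le> c} = prob (?T -` {x. w \<bullet> x \<le> c} \<inter> space (PG mu sig))"
    unfolding gauss_measure_distr[OF sig] by (rule measure_distr[OF Tm]) measurable
  also have "?T -` {x. w \<bullet> x \<le> c} \<inter> space (PG mu sig) = {f\<in>space (PG mu sig). w \<bullet> ?T f \<le> c}"
    by auto
  also have "prob \<dots> = Phi ((c - w \<bullet> mu) / (norm w * sig))"
    by (rule normal_le_Phi[OF PG_linear_normal[OF sig w]]) (use sig w in simp)
  finally show ?thesis .
qed

lemma gauss_gt_Phi:
  fixes mu w :: "'a::euclidean_space"
  assumes sig: "sig > 0" and w: "w \<noteq> 0"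
  shows "measure (gauss_measure mu sig) {x. w \<bullet> x > c} = Phi ((w \<bullet> mu - c) / (norm w * sig))"
proof -
  interpret prob_space "PG mu sig" by (rule prob_space_PG[OF sig])
  let ?T = "\<lambda>f::'a \<Rightarrow> real. \<Sum>b\<in>Basis. f b *\<^sub>R b"
  have Tm: "?T \<in> measurable (PG mu sig) (borel :: 'a measure)"
    unfolding PG_def by measurable
  have "measure (gauss_measure mu sig) {x. w \<bullet> x > c} = prob (?T -` {x. w \<bullet> x > c} \<inter> space (PG mu sig))"
    unfolding gauss_measure_distr[OF sig] by (rule measure_distr[OF Tm]) measurable
  also have "?T -` {x. w \<bullet> x > c} \<inter> space (PG mu sig) = {f\<in>space (PG mu sig). w \<bullet> ?T f > c}"
    by auto
  also have "prob \<dots> = Phi ((w \<bullet> mu - c) / (norm w * sig))"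
    by (rule normal_gt_Phi[OF PG_linear_normal[OF sig w]]) (use sig w in simp)
  finally show ?thesis .
qed

lemma adv_iff:
  fixes w x :: "'a::euclidean_space"
  assumes w: "w \<noteq> 0" and eps: "eps > 0"
  shows "has_adv_example w b eps x \<longleftrightarrow>
     (if lin_classify w b x then w \<bullet> x + b \<le> eps * norm w else w \<bullet> x + b > - (eps * norm w))"
proof -
  have nw: "norm w > 0" using w by simp
  have cs: "\<bar>w \<bullet> (x - x')\<bar> \<le> norm w * norm (x - x')" for x' :: 'a
    by (rule Cauchy_Schwarz_ineq2)
  have ww: "w \<bullet> w = norm w * norm w" by (simp add: power2_norm_eq_inner[symmetric] power2_eq_square)
  show ?thesis
  proof (cases "lin_classify w b x")
    case True
    then have pos: "w \<bullet> x + b > 0" by (simp add: lin_classify_def)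
    have "has_adv_example w b eps x \<longleftrightarrow> w \<bullet> x + b \<le> eps * norm w"
    proof
      assume "has_adv_example w b eps x"
      then obtain x' where x': "norm (x - x') \<le> eps" "\<not> (w \<bullet> x' + b > 0)"
        using True by (auto simp: has_adv_example_def lin_classify_def)
      have "w \<bullet> x - w \<bullet> x' \<le> norm w * norm (x - x')" using cs[of x'] by (simp add: inner_diff_right)
      also have "\<dots> \<le> norm w * eps" using x'(1) nw by (intro mult_left_mono) auto
      finally show "w \<bullet> x + b \<le> eps * norm w" using x'(2) by (simp add: mult.commute)
    next
      assume a: "w \<bullet> x + b \<le> eps * norm w"
      let ?x' = "x - (eps / norm w) *\<^sub>R w"
      have "norm (x - ?x') = eps" using nw eps by simp
      moreover have "w \<bullet> ?x' + b = w \<bullet> x + b - eps * norm w"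
        using nw by (simp add: inner_diff_right ww)
      ultimately show "has_adv_example w b eps x"
        unfolding has_adv_example_def lin_classify_def using a True
        by (intro exI[of _ ?x']) (auto simp: lin_classify_def)
    qed
    then show ?thesis using True by simp
  next
    case False
    then have neg: "\<not> w \<bullet> x + b > 0" by (simp add: lin_classify_def)
    have "has_adv_example w b eps x \<longleftrightarrow> w \<bullet> x + b > - (eps * norm w)"
    proof
      assume "has_adv_example w b eps x"
      then obtain x' where x': "norm (x - x') \<le> eps" "w \<bullet> x' + b > 0"
        using False by (auto simp: has_adv_example_def lin_classify_def)
      have "w \<bullet> x' - w \<bullet> x \<le> norm w * norm (x - x')" using cs[of x'] by (simp add: inner_diff_right)
      also have "\<dots> \<le> norm w * eps" using x'(1) nw by (intro mult_left_mono) auto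
      finally show "w \<bullet> x + b > - (eps * norm w)" using x'(2) by (simp add: mult.commute)
    next
      assume a: "w \<bullet> x + b > - (eps * norm w)"
      let ?x' = "x + (eps / norm w) *\<^sub>R w"
      have "norm (x - ?x') = eps" using nw eps by simp
      moreover have "w \<bullet> ?x' + b = w \<bullet> x + b + eps * norm w"
        using nw by (simp add: inner_add_right ww)
      ultimately show "has_adv_example w b eps x"
        unfolding has_adv_example_def lin_classify_def using a False
        by (intro exI[of _ ?x']) (auto simp: lin_classify_def)
    qed
    then show ?thesis using False by simp
  qed
qed
theorem theorem1:
  fixes M :: "'s measure" and X :: "'s \<Rightarrow> 'a::euclidean_space" and Y :: "'s \<Rightarrow> bool"
    and mu_p mu_m w :: 'a and sig b eps :: real
  assumes "prob_space M"
    and "X \<in> borel_measurable M"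
    and "Y \<in> measurable M (count_space UNIV)"
    and "sig > 0"
    and "w \<noteq> 0"
    and "eps > 0"
    and joint: "\<And>A i. A \<in> sets borel \<Longrightarrow>
        measure M {s \<in> space M. X s \<in> A \<and> Y s = i}
          = (1/2) * measure (gauss_measure (if i then mu_p else mu_m) sig) A"
  shows "let mu = (1/2) *\<^sub>R (mu_p - mu_m);
             mubar = (1/2) *\<^sub>R (mu_p + mu_m);
             b' = w \<bullet> mubar + b;
             p_m = measure M {s \<in> space M. lin_classify w b (X s) \<noteq> Y s};
             p_adv = measure M {s \<in> space M. lin_classify w b (X s) = Y s
                                    \<and> has_adv_example w b eps (X s)}
         in p_adv = 1 - p_m - (1/2) *
              (Phi ((w \<bullet> mu + b') / (norm w * sig) - eps / sig)
             + Phi ((w \<bullet> mu - b') / (norm w * sig) - eps / sig))"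
proof -
  interpret prob_space M by fact
  note [measurable] = assms(2) assms(3)
  have sig: "sig > 0" and w: "w \<noteq> 0" and eps: "eps > 0" using assms by auto
  let ?nw = "norm w"
  let ?L = "\<lambda>x. lin_classify w b x"
  define cp where "cp = eps * ?nw - b"
  define cn where "cn = - (eps * ?nw) - b"
  define Sc where "Sc = {s\<in>space M. ?L (X s) = Y s}"
  define Sm where "Sm = {s\<in>space M. ?L (X s) \<noteq> Y s}"
  define Sa where "Sa = {s\<in>space M. ?L (X s) = Y s \<and> has_adv_example w b eps (X s)}"
  define Sp where "Sp = {s\<in>space M. X s \<in> {x. w \<bullet> x > cp} \<and> Y s = True}"
  define Sn where "Sn = {s\<in>space M. X s \<in> {x. w \<bullet> x \<le> cn} \<and> Y s = False}"
  have Lm[measurable]: "(\<lambda>s. ?L (X s)) \<in> measurable M (count_space UNIV)"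
    unfolding lin_classify_def by measurable
  have Ym: "Y \<in> measurable M (count_space UNIV)" by fact
  have evc: "{s\<in>space M. P (?L (X s)) (Y s)} \<in> events" for P
  proof -
    have "(\<lambda>s. (?L (X s), Y s)) \<in> measurable M (count_space UNIV \<Otimes>\<^sub>M count_space UNIV)"
      using Lm Ym by (rule measurable_Pair)
    moreover have "{p. P (fst p) (snd p)} \<in> sets (count_space (UNIV::bool set) \<Otimes>\<^sub>M count_space (UNIV::bool set))"
      by (subst pair_measure_countable) auto
    ultimately have "(\<lambda>s. (?L (X s), Y s)) -` {p. P (fst p) (snd p)} \<inter> space M \<in> events"
      by (rule measurable_sets)
    then show ?thesis by (simp add: vimage_def Int_def conj_commute)
  qed
  have evSp: "Sp \<in> events" and evSn: "Sn \<in> events"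
  proof -
    have "{s\<in>space M. Y s = i} \<in> events" for i
      using measurable_sets[OF Ym, of "{i}"] by (simp add: vimage_def Int_def conj_commute)
    moreover have "{s\<in>space M. X s \<in> A} \<in> events" if "A \<in> sets borel" for A
      using measurable_sets[OF assms(2) that] by (simp add: vimage_def Int_def conj_commute)
    moreover have "{x::'a. w \<bullet> x > cp} \<in> sets borel" "{x::'a. w \<bullet> x \<le> cn} \<in> sets borel"
      by measurable
    ultimately have "{s\<in>space M. X s \<in> {x. w \<bullet> x > cp}} \<inter> {s\<in>space M. Y s = True} \<in> events"
       "{s\<in>space M. X s \<in> {x. w \<bullet> x \<le> cn}} \<inter> {s\<in>space M. Y s = False} \<in> events"
      by blast+
    then show "Sp \<in> events" "Sn \<in> events" unfolding Sp_def Sn_def by (auto simp: Int_def)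
  qed
  have evSc: "Sc \<in> events" unfolding Sc_def by (rule evc)
  have evSm: "Sm \<in> events" unfolding Sm_def by (rule evc)
  have Sa_eq: "Sa = Sc - (Sp \<union> Sn)"
    unfolding Sa_def Sc_def Sp_def Sn_def cp_def cn_def
    by (auto simp: adv_iff[OF w eps] lin_classify_def)
  have evSa: "Sa \<in> events" unfolding Sa_eq using evSc evSp evSn by blast
  have Sc_eq: "Sc = Sa \<union> (Sp \<union> Sn)" and disj1: "Sa \<inter> (Sp \<union> Sn) = {}"
  proof -
    have "Sp \<union> Sn \<subseteq> Sc"
      unfolding Sc_def Sp_def Sn_def cp_def cn_def using eps w
      by (auto simp: lin_classify_def) (smt (verit) zero_less_norm_iff mult_pos_pos)+
    then show "Sc = Sa \<union> (Sp \<union> Sn)" "Sa \<inter> (Sp \<union> Sn) = {}" unfolding Sa_eq by auto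
  qed
  have disj2: "Sp \<inter> Sn = {}" unfolding Sp_def Sn_def by auto
  have sp: "space M = Sc \<union> Sm" "Sc \<inter> Sm = {}" unfolding Sc_def Sm_def by auto
  have one: "prob Sc + prob Sm = 1"
    using finite_measure_Union[OF evSc evSm sp(2)] sp(1) prob_space by simp
  have two: "prob Sc = prob Sa + prob Sp + prob Sn"
    using finite_measure_Union[OF evSa _ disj1] finite_measure_Union[OF evSp evSn disj2] evSp evSn Sc_eq
    by (simp add: sets.Un)
  have pSp: "prob Sp = (1/2) * Phi ((w \<bullet> mu_p - cp) / (?nw * sig))"
  proof -
    have "prob Sp = (1/2) * measure (gauss_measure mu_p sig) {x. w \<bullet> x > cp}"
      unfolding Sp_def using joint[of "{x. w \<bullet> x > cp}" True] by simp
    then show ?thesis using gauss_gt_Phi[OF sig w] by simp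
  qed
  have pSn: "prob Sn = (1/2) * Phi ((cn - w \<bullet> mu_m) / (?nw * sig))"
  proof -
    have "prob Sn = (1/2) * measure (gauss_measure mu_m sig) {x. w \<bullet> x \<le> cn}"
      unfolding Sn_def using joint[of "{x. w \<bullet> x \<le> cn}" False] by simp
    then show ?thesis using gauss_le_Phi[OF sig w] by simp
  qed
  have a1: "(w \<bullet> mu_p - cp) / (?nw * sig)
      = (w \<bullet> ((1/2) *\<^sub>R (mu_p - mu_m)) + (w \<bullet> ((1/2) *\<^sub>R (mu_p + mu_m)) + b)) / (?nw * sig) - eps / sig"
    using sig w unfolding cp_def by (simp add: inner_diff_right inner_add_right field_simps)
  have a2: "(cn - w \<bullet> mu_m) / (?nw * sig)
      = (w \<bullet> ((1/2) *\<^sub>R (mu_p - mu_m)) - (w \<bullet> ((1/2) *\<^sub>R (mu_p + mu_m)) + b)) / (?nw * sig) - eps / sig"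
    using sig w unfolding cn_def by (simp add: inner_diff_right inner_add_right field_simps)
  have main: "prob Sa = 1 - prob Sm - (1/2) *
     (Phi ((w \<bullet> ((1/2) *\<^sub>R (mu_p - mu_m)) + (w \<bullet> ((1/2) *\<^sub>R (mu_p + mu_m)) + b)) / (?nw * sig) - eps / sig)
    + Phi ((w \<bullet> ((1/2) *\<^sub>R (mu_p - mu_m)) - (w \<bullet> ((1/2) *\<^sub>R (mu_p + mu_m)) + b)) / (?nw * sig) - eps / sig))"
    using one two pSp pSn unfolding a1[symmetric] a2[symmetric] by (simp add: algebra_simps)
  show ?thesis unfolding Let_def using main unfolding Sa_def Sm_def by simp
qed

end
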